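(* For any integers $r,t\ge 3$, $dim_s(K_r\times K_t)=\max\{r(t-1),\ t(r-1)\}$.
   Context: $K_n$ is the complete graph on $n$ vertices. The direct product $G\times H$ has vertex set $V(G)\times V(H)$, with $(a,b)$ adjacent to $(c,d)$ iff $ac\in E(G)$ and $bd\in E(H)$. For a connected graph $G$, $I_G[u,v]$ is the set of vertices lying on some shortest $u$–$v$ path; a vertex $w$ strongly resolves $u,v$ if $v\in I_G[u,w]$ or $u\in I_G[v,w]$; a strong resolving set is a set $S\subseteq V(G)$ such that every pair of vertices is strongly resolved by some vertex of $S$; $dim_s(G)$ is the minimum cardinality of a strong resolving set. *)

theory Defs
  imports Main
begin

text \<open>A graph is given by a vertex set V and an adjacency relation E
 (assumed symmetric and irreflexive where relevant).\<close>

definition is_walk :: "'a set \<Rightarrow> ('a \<Rightarrow> 'a \<Rightarrow> bool) \<Rightarrow> 'a list \<Rightarrow> bool" where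
  "is_walk V E p \<longleftrightarrow> p \<noteq> [] \<and> set p \<subseteq> V \<and>
     (\<forall>i. Suc i < length p \<longrightarrow> E (p ! i) (p ! Suc i))"

text \<open>Walk from u to v; its length is the number of edges, length p - 1.\<close>
definition walk_between :: "'a set \<Rightarrow> ('a \<Rightarrow> 'a \<Rightarrow> bool) \<Rightarrow> 'a \<Rightarrow> 'a \<Rightarrow> 'a list \<Rightarrow> bool" where
  "walk_between V E u v p \<longleftrightarrow> is_walk V E p \<and> hd p = u \<and> last p = v"

definition gdist :: "'a set \<Rightarrow> ('a \<Rightarrow> 'a \<Rightarrow> bool) \<Rightarrow> 'a \<Rightarrow> 'a \<Rightarrow> nat" where
  "gdist V E u v = (LEAST n. \<exists>p. walk_between V E u v p \<and> length p = Suc n)"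

definition connected_graph :: "'a set \<Rightarrow> ('a \<Rightarrow> 'a \<Rightarrow> bool) \<Rightarrow> bool" where
  "connected_graph V E \<longleftrightarrow> V \<noteq> {} \<and> (\<forall>u\<in>V. \<forall>v\<in>V. \<exists>p. walk_between V E u v p)"

definition interval :: "'a set \<Rightarrow> ('a \<Rightarrow> 'a \<Rightarrow> bool) \<Rightarrow> 'a \<Rightarrow> 'a \<Rightarrow> 'a set" where
  "interval V E u v = {w. \<exists>p. walk_between V E u v p \<and> length p = Suc (gdist V E u v) \<and> w \<in> set p}"

definition strongly_resolves :: "'a set \<Rightarrow> ('a \<Rightarrow> 'a \<Rightarrow> bool) \<Rightarrow> 'a \<Rightarrow> 'a \<Rightarrow> 'a \<Rightarrow> bool" where
  "strongly_resolves V E w u v \<longleftrightarrow> v \<in> interval V E u w \<or> u \<in> interval V E v w"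

definition strong_resolving_set :: "'a set \<Rightarrow> ('a \<Rightarrow> 'a \<Rightarrow> bool) \<Rightarrow> 'a set \<Rightarrow> bool" where
  "strong_resolving_set V E S \<longleftrightarrow> S \<subseteq> V \<and>
     (\<forall>u\<in>V. \<forall>v\<in>V. u \<noteq> v \<longrightarrow> (\<exists>w\<in>S. strongly_resolves V E w u v))"

definition strong_metric_dim :: "'a set \<Rightarrow> ('a \<Rightarrow> 'a \<Rightarrow> bool) \<Rightarrow> nat" where
  "strong_metric_dim V E = (LEAST k. \<exists>S. strong_resolving_set V E S \<and> finite S \<and> card S = k)"

definition K_verts :: "nat \<Rightarrow> nat set" where "K_verts n = {0..<n}"
definition K_adj :: "nat \<Rightarrow> nat \<Rightarrow> bool" where "K_adj a b \<longleftrightarrow> a \<noteq> b"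

definition dprod_verts :: "'a set \<Rightarrow> 'b set \<Rightarrow> ('a \<times> 'b) set" where
  "dprod_verts VG VH = VG \<times> VH"
definition dprod_adj :: "('a \<Rightarrow> 'a \<Rightarrow> bool) \<Rightarrow> ('b \<Rightarrow> 'b \<Rightarrow> bool) \<Rightarrow> 'a \<times> 'b \<Rightarrow> 'a \<times> 'b \<Rightarrow> bool" where
  "dprod_adj EG EH x y \<longleftrightarrow> EG (fst x) (fst y) \<and> EH (snd x) (snd y)"

end

theory Submission
  imports Defs
begin

lemma gdist_le:
  assumes "walk_between V E u v p"
  shows "gdist V E u v \<le> length p - 1"
proof -
  have "p \<noteq> []" using assms by (simp add: walk_between_def is_walk_def)
  then have "length p = Suc (length p - 1)" by simp
  then have "\<exists>q. walk_between V E u v q \<and> length q = Suc (length p - 1)" using assms by blast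
  then show ?thesis unfolding gdist_def by (rule Least_le)
qed

lemma gdist_ex:
  assumes "\<exists>p. walk_between V E u v p"
  shows "\<exists>p. walk_between V E u v p \<and> length p = Suc (gdist V E u v)"
proof -
  obtain p where p: "walk_between V E u v p" using assms by blast
  have "p \<noteq> []" using p by (simp add: walk_between_def is_walk_def)
  then have "\<exists>n q. walk_between V E u v q \<and> length q = Suc n" using p
    by (metis Suc_pred length_greater_0_conv)
  then show ?thesis unfolding gdist_def by (rule LeastI_ex)
qed

lemma take_walk:
  assumes "walk_between V E u w p" "i < length p"
  shows "walk_between V E u (p ! i) (take (Suc i) p)"
  using assms unfolding walk_between_def is_walk_def
  apply (auto simp: hd_take last_conv_nth min_def dest: in_set_takeD)
  apply (subgoal_tac "i = length p - Suc 0")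
   apply simp
  apply linarith
  done

lemma ge3:
  assumes "u \<noteq> v" "\<not> E u v" "walk_between V E u v p"
  shows "length p \<ge> 3"
proof (rule ccontr)
  assume "\<not> length p \<ge> 3"
  moreover have "p \<noteq> []" using assms by (simp add: walk_between_def is_walk_def)
  moreover have "length p > 0" using \<open>p \<noteq> []\<close> by simp
  ultimately have "length p = 1 \<or> length p = 2" by linarith
  then show False
  proof
    assume "length p = 1"
    then obtain x where "p = [x]" by (metis One_nat_def length_0_conv length_Suc_conv)
    then show False using assms by (auto simp: walk_between_def)
  next
    assume l: "length p = 2"
    then obtain x y where "p = [x, y]"
      by (metis One_nat_def Suc_1 length_0_conv length_Suc_conv)
    then show False using assms by (auto simp: walk_between_def is_walk_def)
  qed
qed

lemma in_interval_last:
  assumes "v \<in> interval V E u w"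
    and "\<And>p. walk_between V E u v p \<Longrightarrow> length p \<ge> 3"
    and "gdist V E u w \<le> 2"
  shows "v = w"
proof -
  obtain p where p: "walk_between V E u w p" "length p = Suc (gdist V E u w)" "v \<in> set p"
    using assms(1) unfolding interval_def by blast
  then obtain i where i: "i < length p" "p ! i = v" by (meson in_set_conv_nth)
  have "walk_between V E u v (take (Suc i) p)" using take_walk[OF p(1) i(1)] i(2) by simp
  then have "length (take (Suc i) p) \<ge> 3" using assms(2) by blast
  then have "i \<ge> 2" by simp
  with i p assms(3) have "i = length p - 1" by linarith
  moreover have "last p = p ! (length p - 1)" using p
    by (intro last_conv_nth) (auto simp: walk_between_def is_walk_def)
  ultimately have "v = last p" using i by simp
  then show ?thesis using p by (simp add: walk_between_def)
qed

lemma last_in_interval: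
  assumes "\<exists>p. walk_between V E v u p"
  shows "u \<in> interval V E v u"
proof -
  obtain p where p: "walk_between V E v u p" "length p = Suc (gdist V E v u)"
    using gdist_ex[OF assms] by blast
  have "u = last p" "p \<noteq> []" using p by (auto simp: walk_between_def is_walk_def)
  then have "u \<in> set p" by simp
  then show ?thesis using p unfolding interval_def by blast
qed

lemma E_iff: "dprod_adj K_adj K_adj x y \<longleftrightarrow> fst x \<noteq> fst y \<and> snd x \<noteq> snd y"
  by (simp add: dprod_adj_def K_adj_def)

lemma pick3: "\<exists>c::nat. c < 3 \<and> c \<noteq> a \<and> c \<noteq> b"
  by (rule exI[of _ "if a \<noteq> 0 \<and> b \<noteq> 0 then 0 else if a \<noteq> 1 \<and> b \<noteq> 1 then 1 else 2"]) auto

lemma walk3_list: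
  assumes "set [u, x, w] \<subseteq> V" "E u x" "E x w"
  shows "walk_between V E u w [u, x, w]"
  unfolding walk_between_def is_walk_def
proof (intro conjI allI impI)
  fix i assume "Suc i < length [u, x, w]"
  then have "i = 0 \<or> i = 1" by auto
  then show "E ([u, x, w] ! i) ([u, x, w] ! Suc i)" using assms by auto
qed (use assms in auto)

lemma walk3:
  assumes "r \<ge> 3" "t \<ge> 3"
    and "u \<in> dprod_verts (K_verts r) (K_verts t)" "w \<in> dprod_verts (K_verts r) (K_verts t)"
  shows "\<exists>p. walk_between (dprod_verts (K_verts r) (K_verts t)) (dprod_adj K_adj K_adj) u w p
           \<and> length p = 3"
proof -
  obtain c where c: "c < 3" "c \<noteq> fst u" "c \<noteq> fst w" using pick3 by blast
  obtain d where d: "d < 3" "d \<noteq> snd u" "d \<noteq> snd w" using pick3 by blast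
  have "(c, d) \<in> dprod_verts (K_verts r) (K_verts t)"
    using c d assms by (auto simp: dprod_verts_def K_verts_def)
  then have "walk_between (dprod_verts (K_verts r) (K_verts t)) (dprod_adj K_adj K_adj) u w [u, (c,d), w]"
    using assms c d by (intro walk3_list) (auto simp: E_iff)
  then show ?thesis by fastforce
qed

lemma max_eq:
  fixes r t :: nat
  shows "max (r * (t - 1)) (t * (r - 1)) = r * t - min r t"
proof -
  have a: "r * (t - 1) = r * t - r" by (simp add: right_diff_distrib')
  have b: "t * (r - 1) = r * t - t" by (simp add: right_diff_distrib' mult.commute)
  show ?thesis
  proof (cases "r = 0 \<or> t = 0")
    case True then show ?thesis by auto
  next
    case False
    then have "r * t \<ge> r" "r * t \<ge> t" by auto
    then show ?thesis unfolding a b by (auto simp: max_def min_def)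
  qed
qed

theorem proposition34:
  fixes r t :: nat
  assumes "r \<ge> 3" and "t \<ge> 3"
  shows "strong_metric_dim (dprod_verts (K_verts r) (K_verts t)) (dprod_adj K_adj K_adj)
           = max (r * (t - 1)) (t * (r - 1))"
proof -
  define V where "V = dprod_verts (K_verts r) (K_verts t)"
  define E where "E = dprod_adj K_adj K_adj"
  have Eiff: "E x y \<longleftrightarrow> fst x \<noteq> fst y \<and> snd x \<noteq> snd y" for x y
    unfolding E_def by (rule E_iff)
  have Vcard: "card V = r * t" and Vfin: "finite V"
    unfolding V_def dprod_verts_def K_verts_def by (auto simp: card_cartesian_product)
  have W3: "\<exists>p. walk_between V E u w p \<and> length p = 3" if "u \<in> V" "w \<in> V" for u w
    using walk3[OF assms] that unfolding V_def E_def by blast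
  have gd2: "gdist V E u w \<le> 2" if "u \<in> V" "w \<in> V" for u w
    using W3[OF that] gdist_le by fastforce
  have conn: "\<exists>p. walk_between V E u w p" if "u \<in> V" "w \<in> V" for u w
    using W3[OF that] by blast
  have lower: "card S \<ge> r * t - min r t" if S: "strong_resolving_set V E S" "finite S" for S
  proof -
    define T where "T = V - S"
    have SV: "S \<subseteq> V" using S unfolding strong_resolving_set_def by blast
    have adjT: "E x y" if xyT: "x \<in> T" "y \<in> T" "x \<noteq> y" for x y
    proof (rule ccontr)
      assume ne: "\<not> E x y"
      then have ne': "\<not> E y x" using Eiff by auto
      have xV: "x \<in> V" "y \<in> V" using xyT unfolding T_def by auto
      then obtain w where w: "w \<in> S" "strongly_resolves V E w x y"
        using S xyT(3) unfolding strong_resolving_set_def by blast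
      have wV: "w \<in> V" using w SV by blast
      show False using w(2) unfolding strongly_resolves_def
      proof
        assume "y \<in> interval V E x w"
        then have "y = w" using in_interval_last[of y V E x w] ge3[of x y E V, OF xyT(3) ne] gd2 xV wV
          by blast
        then show False using w xyT unfolding T_def by blast
      next
        assume "x \<in> interval V E y w"
        then have "x = w" using in_interval_last[of x V E y w] ge3[of y x E V, OF xyT(3)[symmetric] ne'] gd2 xV wV
          by blast
        then show False using w xyT unfolding T_def by blast
      qed
    qed
    have injf: "inj_on fst T" and injs: "inj_on snd T"
      using adjT Eiff unfolding inj_on_def by blast+
    have TV: "T \<subseteq> V" unfolding T_def by blast
    have "fst ` T \<subseteq> {0..<r}" "snd ` T \<subseteq> {0..<t}"
      using TV unfolding V_def dprod_verts_def K_verts_def by auto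
    then have "card (fst ` T) \<le> r" "card (snd ` T) \<le> t"
      by (metis card_atLeastLessThan card_mono diff_zero finite_atLeastLessThan)+
    then have cT: "card T \<le> min r t" using card_image[OF injf] card_image[OF injs] by simp
    have "V = S \<union> T" using SV unfolding T_def by blast
    then have "card V \<le> card S + card T" by (metis card_Un_le)
    then show ?thesis using cT Vcard by linarith
  qed
  define D where "D = (\<lambda>i. (i, i)) ` {0..<min r t}"
  define S where "S = V - D"
  have DV: "D \<subseteq> V" unfolding D_def V_def dprod_verts_def K_verts_def by auto
  have cD: "card D = min r t" unfolding D_def by (subst card_image) (auto simp: inj_on_def)
  have cS: "card S = r * t - min r t" unfolding S_def using DV Vfin cD Vcard
    by (simp add: card_Diff_subset finite_subset)
  have Sres: "strong_resolving_set V E S"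
    unfolding strong_resolving_set_def
  proof (intro conjI ballI impI)
    show "S \<subseteq> V" unfolding S_def by blast
  next
    fix u v assume uv: "u \<in> V" "v \<in> V" "u \<noteq> v"
    show "\<exists>w\<in>S. strongly_resolves V E w u v"
    proof (cases "u \<in> S")
      case True
      then show ?thesis using last_in_interval[OF conn[OF uv(2) uv(1)]]
        unfolding strongly_resolves_def by blast
    next
      case uS: False
      show ?thesis
      proof (cases "v \<in> S")
        case True
        then show ?thesis using last_in_interval[OF conn[OF uv(1) uv(2)]]
          unfolding strongly_resolves_def by blast
      next
        case vS: False
        obtain i where i: "u = (i, i)" "i < min r t" using uS uv unfolding S_def D_def by auto
        obtain j where j: "v = (j, j)" "j < min r t" using vS uv unfolding S_def D_def by auto
        obtain c where c: "c < 3" "c \<noteq> i" "c \<noteq> j" using pick3 by blast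
        define w where "w = (i, c)"
        have wV: "w \<in> V" using i c assms unfolding w_def V_def dprod_verts_def K_verts_def by auto
        have wS: "w \<in> S" using wV c unfolding S_def D_def w_def by auto
        have ij: "i \<noteq> j" using uv i j by auto
        have p: "walk_between V E u w [u, v, w]"
          using uv wV ij c i j by (intro walk3_list) (auto simp: Eiff w_def)
        have uw: "u \<noteq> w" "\<not> E u w" using c i by (auto simp: w_def Eiff)
        obtain q where q: "walk_between V E u w q" "length q = Suc (gdist V E u w)"
          using gdist_ex[OF conn[OF uv(1) wV]] by blast
        have "length q \<ge> 3" using ge3[OF uw q(1)] .
        then have "gdist V E u w = 2" using q(2) gd2[OF uv(1) wV] by linarith
        then have "v \<in> interval V E u w" using p unfolding interval_def by force
        then show ?thesis using wS unfolding strongly_resolves_def by blast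
      qed
    qed
  qed
  have "strong_metric_dim V E = r * t - min r t"
    unfolding strong_metric_dim_def
  proof (rule Least_equality)
    show "\<exists>S'. strong_resolving_set V E S' \<and> finite S' \<and> card S' = r * t - min r t"
      using Sres cS Vfin by (metis S_def finite_Diff)
  next
    fix k assume "\<exists>S'. strong_resolving_set V E S' \<and> finite S' \<and> card S' = k"
    then show "r * t - min r t \<le> k" using lower by blast
  qed
  then show ?thesis unfolding V_def E_def max_eq .
qed

end
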